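(* Let $\omega:\mathbb N\to[1,\infty)$ be an unbounded weight on $\mathbb N_{\min}$. Then $(\ell^1_\omega(\mathbb N_{\min}),\mathbf T_2)$ is not an AMNM pair.
   Context: $\mathbb N_{\min}$ is the semilattice $\mathbb N$ with product $(m,n)\mapsto\min(m,n)$; every function $\omega:\mathbb N\to[1,\infty)$ is a submultiplicative weight on it. $\ell^1_\omega(\mathbb N_{\min})$ is the Banach space of $a:\mathbb N\to\mathbb C$ with $\|a\|=\sum_n|a(n)|\omega(n)<\infty$, with convolution product $\delta_m*\delta_n=\delta_{\min(m,n)}$. $\mathbf T_2=\{\begin{pmatrix}a&b\\0&a\end{pmatrix}:a,b\in\mathbb C\}$ with norm $|a|+|b|$. For a bounded linear map $T:A\to B$ between Banach algebras, $\operatorname{def}(T)=\sup\{\|T(xy)-T(x)T(y)\|:\|x\|,\|y\|\le1\}$ and $\operatorname{Mult}(A,B)$ is the set of bounded multiplicative linear maps $A\to B$ (including $0$). $(A,B)$ is an AMNM pair if for every $K>0$ and $\varepsilon>0$ there exists $\delta>0$ such that every bounded linear $T:A\to B$ with $\|T\|\le K$ and $\operatorname{def}(T)\le\delta$ satisfies $\operatorname{dist}(T,\operatorname{Mult}(A,B))\le\varepsilon$ in operator norm. *)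

theory Defs
  imports "HOL-Analysis.Analysis"
begin

definition l1w :: "(nat \<Rightarrow> real) \<Rightarrow> (nat \<Rightarrow> complex) set" where
  "l1w \<omega> = {a. summable (\<lambda>n. norm (a n) * \<omega> n)}"

definition wnorm :: "(nat \<Rightarrow> real) \<Rightarrow> (nat \<Rightarrow> complex) \<Rightarrow> real" where
  "wnorm \<omega> a = (\<Sum>n. norm (a n) * \<omega> n)"

text \<open>Convolution with delta_m * delta_n = delta_(min m n):
  (a*b)(k) = sum over min m n = k of a m b n
           = a k * (sum over n \<ge> k of b n) + b k * (sum over m > k of a m).\<close>
definition conv :: "(nat \<Rightarrow> complex) \<Rightarrow> (nat \<Rightarrow> complex) \<Rightarrow> nat \<Rightarrow> complex" where
  "conv a b k = a k * (\<Sum>n. if k \<le> n then b n else 0)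
              + b k * (\<Sum>m. if k < m then a m else 0)"

section \<open>The algebra T_2, represented as pairs (a,b) for the matrix [[a,b],[0,a]]\<close>

definition t2norm :: "complex \<times> complex \<Rightarrow> real" where
  "t2norm x = norm (fst x) + norm (snd x)"

definition t2mult :: "complex \<times> complex \<Rightarrow> complex \<times> complex \<Rightarrow> complex \<times> complex" where
  "t2mult x y = (fst x * fst y, fst x * snd y + snd x * fst y)"

definition t2scale :: "complex \<Rightarrow> complex \<times> complex \<Rightarrow> complex \<times> complex" where
  "t2scale c x = (c * fst x, c * snd x)"

section \<open>Maps l^1_omega(N_min) -> T_2 (only their values on l1w matter)\<close>

definition bdd_lin :: "(nat \<Rightarrow> real) \<Rightarrow> ((nat \<Rightarrow> complex) \<Rightarrow> complex \<times> complex) \<Rightarrow> bool" where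
  "bdd_lin \<omega> T \<longleftrightarrow>
     (\<forall>a\<in>l1w \<omega>. \<forall>b\<in>l1w \<omega>. T (\<lambda>n. a n + b n) = T a + T b) \<and>
     (\<forall>c. \<forall>a\<in>l1w \<omega>. T (\<lambda>n. c * a n) = t2scale c (T a)) \<and>
     (\<exists>C. \<forall>a\<in>l1w \<omega>. t2norm (T a) \<le> C * wnorm \<omega> a)"

definition opnorm :: "(nat \<Rightarrow> real) \<Rightarrow> ((nat \<Rightarrow> complex) \<Rightarrow> complex \<times> complex) \<Rightarrow> real" where
  "opnorm \<omega> T = (SUP a\<in>{a\<in>l1w \<omega>. wnorm \<omega> a \<le> 1}. t2norm (T a))"

definition defect :: "(nat \<Rightarrow> real) \<Rightarrow> ((nat \<Rightarrow> complex) \<Rightarrow> complex \<times> complex) \<Rightarrow> real" where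
  "defect \<omega> T = (SUP p\<in>{(a, b). a \<in> l1w \<omega> \<and> b \<in> l1w \<omega> \<and> wnorm \<omega> a \<le> 1 \<and> wnorm \<omega> b \<le> 1}.
       t2norm (T (conv (fst p) (snd p)) - t2mult (T (fst p)) (T (snd p))))"

definition Mult :: "(nat \<Rightarrow> real) \<Rightarrow> ((nat \<Rightarrow> complex) \<Rightarrow> complex \<times> complex) set" where
  "Mult \<omega> = {S. bdd_lin \<omega> S \<and>
     (\<forall>a\<in>l1w \<omega>. \<forall>b\<in>l1w \<omega>. S (conv a b) = t2mult (S a) (S b))}"

definition dist_mult :: "(nat \<Rightarrow> real) \<Rightarrow> ((nat \<Rightarrow> complex) \<Rightarrow> complex \<times> complex) \<Rightarrow> real" where
  "dist_mult \<omega> T = (INF S\<in>Mult \<omega>. opnorm \<omega> (\<lambda>a. T a - S a))"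

definition AMNM_pair :: "(nat \<Rightarrow> real) \<Rightarrow> bool" where
  "AMNM_pair \<omega> \<longleftrightarrow>
     (\<forall>K>0. \<forall>\<epsilon>>0. \<exists>\<delta>>0. \<forall>T. bdd_lin \<omega> T \<and> opnorm \<omega> T \<le> K \<and> defect \<omega> T \<le> \<delta>
        \<longrightarrow> dist_mult \<omega> T \<le> \<epsilon>)"

end

theory Submission
  imports Defs
begin

definition tls :: "(nat \<Rightarrow> complex) \<Rightarrow> nat \<Rightarrow> complex" where
  "tls a k = (\<Sum>n. if k \<le> n then a n else 0)"

lemma l1w_summable_norm:
  assumes w: "\<And>n. \<omega> n \<ge> 1" and a: "a \<in> l1w \<omega>"
  shows "summable (\<lambda>n. norm (a n))"
proof -
  have s: "summable (\<lambda>n. norm (a n) * \<omega> n)" using a by (simp add: l1w_def)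
  show ?thesis
  proof (rule summable_comparison_test'[OF s])
    fix n
    have "norm (a n) * 1 \<le> norm (a n) * \<omega> n"
      by (rule mult_left_mono) (use w in auto)
    then show "norm (norm (a n)) \<le> norm (a n) * \<omega> n" by simp
  qed
qed

lemma summable_if_tail:
  assumes "summable (\<lambda>n. norm (a n))"
  shows "summable (\<lambda>n. if k \<le> n then a n else (0::complex))"
  by (rule summable_comparison_test'[OF assms]) auto

lemma summable_if_tail_norm:
  assumes "summable (\<lambda>n. norm (a n))"
  shows "summable (\<lambda>n. norm (if k \<le> n then a n else (0::complex)))"
  by (rule summable_comparison_test'[OF assms]) auto

lemma tls_step:
  assumes "summable (\<lambda>n. norm (a n))"
  shows "tls a k = a k + tls a (Suc k)"
proof -
  have eq: "(\<lambda>n. if k \<le> n then a n else 0) =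
        (\<lambda>n. (if n = k then a n else 0) + (if Suc k \<le> n then a n else 0))"
    by (rule ext) auto
  have s1: "summable (\<lambda>n. if n = k then a n else (0::complex))"
    using sums_single[of k a] sums_summable by blast
  have "tls a k = (\<Sum>n. (if n = k then a n else 0)) + (\<Sum>n. if Suc k \<le> n then a n else 0)"
    unfolding tls_def eq
    by (rule suminf_add[OF s1 summable_if_tail[OF assms], symmetric])
  also have "(\<Sum>n. (if n = k then a n else 0)) = a k"
    using sums_single[of k a] sums_unique by metis
  finally show ?thesis by (simp add: tls_def)
qed

lemma tls_closed:
  assumes "summable (\<lambda>n. norm (a n))"
  shows "tls a k = suminf a - (\<Sum>i<k. a i)"
proof (induction k)
  case 0
  then show ?case by (simp add: tls_def)
next
  case (Suc k)
  then show ?case using tls_step[OF assms, of k] by (simp add: algebra_simps)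
qed

lemma tls_lim:
  assumes "summable (\<lambda>n. norm (a n))"
  shows "(\<lambda>k. tls a k) \<longlonglongrightarrow> 0"
proof -
  have sa: "summable a" using assms summable_norm_cancel by blast
  have "(\<lambda>k. suminf a - (\<Sum>i<k. a i)) \<longlonglongrightarrow> suminf a - suminf a"
    by (intro tendsto_diff tendsto_const summable_LIMSEQ sa)
  then show ?thesis using tls_closed[OF assms] by simp
qed

lemma conv_tel:
  assumes "summable (\<lambda>n. norm (a n))" "summable (\<lambda>n. norm (b n))"
  shows "conv a b k = tls a k * tls b k - tls a (Suc k) * tls b (Suc k)"
proof -
  have c: "conv a b k = a k * tls b k + b k * tls a (Suc k)"
    unfolding conv_def tls_def by (simp add: Suc_le_eq)
  show ?thesis unfolding c tls_step[OF assms(1), of k] tls_step[OF assms(2), of k]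
    by (simp add: algebra_simps)
qed

lemma tls_conv:
  assumes "summable (\<lambda>n. norm (a n))" "summable (\<lambda>n. norm (b n))"
  shows "tls (conv a b) N = tls a N * tls b N"
proof -
  define g where "g k = tls a k * tls b k" for k
  define h where "h n = g (n + N)" for n
  have "g \<longlonglongrightarrow> 0 * 0" unfolding g_def
    by (intro tendsto_mult tls_lim assms)
  then have "h \<longlonglongrightarrow> 0" unfolding h_def
    using LIMSEQ_ignore_initial_segment by fastforce
  then have hs: "(\<lambda>n. h n - h (Suc n)) sums (h 0 - 0)" by (rule telescope_sums')
  define f where "f n = (if N \<le> n then conv a b n else 0)" for n
  have "(\<lambda>i. f (i + N)) = (\<lambda>n. h n - h (Suc n))"
    by (rule ext) (simp add: f_def h_def g_def conv_tel[OF assms])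
  with hs have "(\<lambda>i. f (i + N)) sums h 0" by simp
  then have "f sums (h 0 + (\<Sum>i<N. f i))" by (simp add: sums_iff_shift)
  moreover have "(\<Sum>i<N. f i) = 0" by (simp add: f_def)
  ultimately have "f sums h 0" by simp
  then show ?thesis unfolding tls_def f_def[symmetric] h_def g_def
    by (simp add: sums_iff)
qed

lemma nn_term:
  assumes w: "\<And>n. \<omega> n \<ge> 1"
  shows "0 \<le> norm (a n) * \<omega> n"
  by (meson mult_nonneg_nonneg norm_ge_zero order_trans zero_le_one w)

definition TT :: "(nat \<Rightarrow> real) \<Rightarrow> nat \<Rightarrow> (nat \<Rightarrow> complex) \<Rightarrow> complex \<times> complex" where
  "TT \<omega> N a = (tls a N, complex_of_real (\<omega> N) * a N)"

lemma wnorm_ge_term: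
  assumes w: "\<And>n. \<omega> n \<ge> 1" and a: "a \<in> l1w \<omega>"
  shows "norm (a N) * \<omega> N \<le> wnorm \<omega> a"
proof -
  have s: "summable (\<lambda>n. norm (a n) * \<omega> n)" using a by (simp add: l1w_def)
  have "(\<Sum>n\<in>{N}. norm (a n) * \<omega> n) \<le> wnorm \<omega> a"
    unfolding wnorm_def
    by (rule sum_le_suminf[OF s]) (use nn_term[OF w] in auto)
  then show ?thesis by simp
qed

lemma norm_tls_le:
  assumes w: "\<And>n. \<omega> n \<ge> 1" and a: "a \<in> l1w \<omega>"
  shows "norm (tls a N) \<le> wnorm \<omega> a"
proof -
  have sn: "summable (\<lambda>n. norm (a n))" by (rule l1w_summable_norm[OF w a])
  have s: "summable (\<lambda>n. norm (a n) * \<omega> n)" using a by (simp add: l1w_def)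
  have "norm (tls a N) \<le> (\<Sum>n. norm (if N \<le> n then a n else 0))"
    unfolding tls_def by (rule summable_norm[OF summable_if_tail_norm[OF sn]])
  also have "\<dots> \<le> (\<Sum>n. norm (a n) * \<omega> n)"
  proof (rule suminf_le[OF _ summable_if_tail_norm[OF sn] s])
    fix n
    have "norm (a n) * 1 \<le> norm (a n) * \<omega> n"
      by (rule mult_left_mono) (use w in auto)
    then show "norm (if N \<le> n then a n else 0) \<le> norm (a n) * \<omega> n"
      using nn_term[OF w, of a n] by auto
  qed
  finally show ?thesis by (simp add: wnorm_def)
qed

lemma TT_bound:
  assumes w: "\<And>n. \<omega> n \<ge> 1" and a: "a \<in> l1w \<omega>"
  shows "t2norm (TT \<omega> N a) \<le> 2 * wnorm \<omega> a"
proof -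
  have "norm (complex_of_real (\<omega> N) * a N) = norm (a N) * \<omega> N"
    using w[of N] by (simp add: norm_mult)
  then show ?thesis
    using wnorm_ge_term[OF w a, of N] norm_tls_le[OF w a, of N]
    by (simp add: t2norm_def TT_def)
qed

lemma TT_bdd_lin:
  assumes w: "\<And>n. \<omega> n \<ge> 1"
  shows "bdd_lin \<omega> (TT \<omega> N)"
  unfolding bdd_lin_def
proof (intro conjI ballI allI exI)
  fix a b assume a: "a \<in> l1w \<omega>" and b: "b \<in> l1w \<omega>"
  have sa: "summable (\<lambda>n. norm (a n))" by (rule l1w_summable_norm[OF w a])
  have sb: "summable (\<lambda>n. norm (b n))" by (rule l1w_summable_norm[OF w b])
  have "tls (\<lambda>n. a n + b n) N = tls a N + tls b N"
  proof -
    have "(\<lambda>n. if N \<le> n then a n + b n else 0) =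
          (\<lambda>n. (if N \<le> n then a n else 0) + (if N \<le> n then b n else 0))" by auto
    then show ?thesis unfolding tls_def
      using suminf_add[OF summable_if_tail[OF sa] summable_if_tail[OF sb]] by simp
  qed
  then show "TT \<omega> N (\<lambda>n. a n + b n) = TT \<omega> N a + TT \<omega> N b"
    by (simp add: TT_def algebra_simps)
next
  fix c :: complex and a assume a: "a \<in> l1w \<omega>"
  have sa: "summable (\<lambda>n. norm (a n))" by (rule l1w_summable_norm[OF w a])
  have "tls (\<lambda>n. c * a n) N = c * tls a N"
  proof -
    have "(\<lambda>n. if N \<le> n then c * a n else 0) =
          (\<lambda>n. c * (if N \<le> n then a n else 0))" by auto
    then show ?thesis unfolding tls_def
      using suminf_mult[OF summable_if_tail[OF sa], of c] by simp
  qed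
  then show "TT \<omega> N (\<lambda>n. c * a n) = t2scale c (TT \<omega> N a)"
    by (simp add: TT_def t2scale_def algebra_simps)
next
  fix a assume a: "a \<in> l1w \<omega>"
  show "t2norm (TT \<omega> N a) \<le> 2 * wnorm \<omega> a" by (rule TT_bound[OF w a])
qed

lemma TT_opnorm:
  assumes w: "\<And>n. \<omega> n \<ge> 1"
  shows "opnorm \<omega> (TT \<omega> N) \<le> 2"
  unfolding opnorm_def
proof (rule cSUP_least)
  have "(\<lambda>n. 0) \<in> l1w \<omega>" by (simp add: l1w_def)
  moreover have "wnorm \<omega> (\<lambda>n. 0) \<le> 1" by (simp add: wnorm_def)
  ultimately show "{a \<in> l1w \<omega>. wnorm \<omega> a \<le> 1} \<noteq> {}" by blast
next
  fix a assume "a \<in> {a \<in> l1w \<omega>. wnorm \<omega> a \<le> 1}"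
  then have a: "a \<in> l1w \<omega>" "wnorm \<omega> a \<le> 1" by auto
  have "t2norm (TT \<omega> N a) \<le> 2 * wnorm \<omega> a" by (rule TT_bound) (use w a in auto)
  then show "t2norm (TT \<omega> N a) \<le> 2" using a by auto
qed

lemma conv_at:
  "conv a b k = a k * tls b k + b k * tls a (Suc k)"
  unfolding conv_def tls_def by (simp add: Suc_le_eq)

lemma TT_defect_pt:
  assumes w: "\<And>n. \<omega> n \<ge> 1" and a: "a \<in> l1w \<omega>" and b: "b \<in> l1w \<omega>"
    and na: "wnorm \<omega> a \<le> 1" and nb: "wnorm \<omega> b \<le> 1"
  shows "t2norm (TT \<omega> N (conv a b) - t2mult (TT \<omega> N a) (TT \<omega> N b)) \<le> 1 / \<omega> N"
proof -
  have sa: "summable (\<lambda>n. norm (a n))" by (rule l1w_summable_norm[OF w a])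
  have sb: "summable (\<lambda>n. norm (b n))" by (rule l1w_summable_norm[OF w b])
  define W where "W = \<omega> N"
  have W1: "W \<ge> 1" using w by (simp add: W_def)
  have eq: "TT \<omega> N (conv a b) - t2mult (TT \<omega> N a) (TT \<omega> N b) = (0, - (of_real W * a N * b N))"
    unfolding TT_def t2mult_def W_def[symmetric]
    by (simp add: tls_conv[OF sa sb] conv_at tls_step[OF sa, of N] algebra_simps)
  have x: "norm (a N) * W \<le> 1" using wnorm_ge_term[OF w a, of N] na by (simp add: W_def)
  have y: "norm (b N) * W \<le> 1" using wnorm_ge_term[OF w b, of N] nb by (simp add: W_def)
  have "(norm (a N) * W) * (norm (b N) * W) \<le> 1 * 1"
    by (rule mult_mono[OF x y]) (use W1 in auto)
  then have "W * (norm (a N) * norm (b N)) * W \<le> 1" by (simp add: algebra_simps)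
  then have "W * (norm (a N) * norm (b N)) \<le> 1 / W" using W1 by (simp add: field_simps)
  then show ?thesis unfolding eq t2norm_def W_def[symmetric] using W1
    by (simp add: norm_mult)
qed

lemma TT_defect:
  assumes w: "\<And>n. \<omega> n \<ge> 1"
  shows "defect \<omega> (TT \<omega> N) \<le> 1 / \<omega> N"
  unfolding defect_def
proof (rule cSUP_least)
  have "(\<lambda>n. 0) \<in> l1w \<omega>" by (simp add: l1w_def)
  moreover have "wnorm \<omega> (\<lambda>n. 0) \<le> 1" by (simp add: wnorm_def)
  ultimately show "{(a, b). a \<in> l1w \<omega> \<and> b \<in> l1w \<omega> \<and> wnorm \<omega> a \<le> 1 \<and> wnorm \<omega> b \<le> 1} \<noteq> {}"
    by blast
next
  fix p assume "p \<in> {(a, b). a \<in> l1w \<omega> \<and> b \<in> l1w \<omega> \<and> wnorm \<omega> a \<le> 1 \<and> wnorm \<omega> b \<le> 1}"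
  then obtain a b where p: "p = (a, b)" "a \<in> l1w \<omega>" "b \<in> l1w \<omega>" "wnorm \<omega> a \<le> 1" "wnorm \<omega> b \<le> 1"
    by auto
  show "t2norm (TT \<omega> N (conv (fst p) (snd p)) - t2mult (TT \<omega> N (fst p)) (TT \<omega> N (snd p))) \<le> 1 / \<omega> N"
    unfolding p(1) fst_conv snd_conv by (rule TT_defect_pt) (use w p in auto)
qed

lemma t2norm_diff: "t2norm (x - y) \<le> t2norm x + t2norm y"
  unfolding t2norm_def
  using norm_triangle_ineq4[of "fst x" "fst y"] norm_triangle_ineq4[of "snd x" "snd y"]
  by simp

lemma wnorm_nonneg:
  assumes w: "\<And>n. \<omega> n \<ge> 1" and a: "a \<in> l1w \<omega>"
  shows "0 \<le> wnorm \<omega> a"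
  unfolding wnorm_def
  by (rule suminf_nonneg) (use a nn_term[OF w] in \<open>auto simp: l1w_def\<close>)

lemma Mult_far:
  assumes w: "\<And>n. \<omega> n \<ge> 1" and S: "S \<in> Mult \<omega>"
  shows "1 \<le> opnorm \<omega> (\<lambda>a. TT \<omega> N a - S a)"
proof -
  define W where "W = \<omega> N"
  have W1: "W \<ge> 1" using w by (simp add: W_def)
  define e :: "nat \<Rightarrow> complex" where "e n = (if n = N then 1 else 0)" for n
  have e1: "(\<lambda>n. norm (e n) * \<omega> n) = (\<lambda>n. if n = N then \<omega> n else 0)"
    by (rule ext) (simp add: e_def)
  have el: "e \<in> l1w \<omega>" unfolding l1w_def using e1 sums_single[of N \<omega>] sums_summable by fastforce
  have tlse: "tls e k = (if k \<le> N then 1 else 0)" for k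
  proof -
    have "(\<lambda>n. if k \<le> n then e n else 0) = (\<lambda>n. if n = N then (\<lambda>_. if k \<le> N then 1 else 0) n else 0)"
      by (rule ext) (auto simp: e_def)
    note eqf = this
    have s: "(\<lambda>n. if n = N then (\<lambda>_. if k \<le> N then 1 else (0::complex)) n else 0) sums ((\<lambda>_. if k \<le> N then 1 else (0::complex)) N)"
      by (rule sums_single)
    from sums_unique[OF s] show ?thesis unfolding tls_def eqf by simp
  qed
  have cee: "conv e e = e"
    by (rule ext) (simp add: conv_at tlse e_def)
  have bl: "bdd_lin \<omega> S" and mS: "\<forall>a\<in>l1w \<omega>. \<forall>b\<in>l1w \<omega>. S (conv a b) = t2mult (S a) (S b)"
    using S by (auto simp: Mult_def)
  have "S (conv e e) = t2mult (S e) (S e)" using mS el by blast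
  then have "S e = t2mult (S e) (S e)" using cee by simp
  then have h1: "fst (S e) = fst (S e) * fst (S e)" and h2: "snd (S e) = fst (S e) * snd (S e) + snd (S e) * fst (S e)"
    unfolding t2mult_def by (metis fst_conv, metis snd_conv)
  have se0: "snd (S e) = 0"
  proof (cases "fst (S e) = 0")
    case True then show ?thesis using h2 by simp
  next
    case False
    then have "fst (S e) = 1" using h1 by (metis mult_cancel_left1)
    then show ?thesis using h2 by simp
  qed
  define c :: complex where "c = of_real (1 / W)"
  define u where "u n = c * e n" for n
  have u1: "(\<lambda>n. norm (u n) * \<omega> n) = (\<lambda>n. if n = N then (\<lambda>_. 1::real) n else 0)"
    by (rule ext) (use W1 in \<open>simp add: u_def e_def c_def W_def norm_mult norm_divide\<close>)
  have ul: "u \<in> l1w \<omega>" unfolding l1w_def using u1 sums_single[of N "\<lambda>_. 1::real"] sums_summable by fastforce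
  have un: "wnorm \<omega> u \<le> 1" unfolding wnorm_def u1
    using sums_single[of N "\<lambda>_. 1::real"] sums_unique by fastforce
  have Su: "S u = t2scale c (S e)"
    using bl el unfolding bdd_lin_def u_def by blast
  have TTu: "snd (TT \<omega> N u) = 1"
    using W1 by (simp add: TT_def u_def e_def c_def W_def)
  have one: "1 \<le> t2norm (TT \<omega> N u - S u)"
    unfolding t2norm_def using Su TTu se0 by (simp add: t2scale_def)
  obtain C where C: "\<forall>a\<in>l1w \<omega>. t2norm (S a) \<le> C * wnorm \<omega> a" using bl unfolding bdd_lin_def by blast
  have bdd: "bdd_above ((\<lambda>a. t2norm (TT \<omega> N a - S a)) ` {a \<in> l1w \<omega>. wnorm \<omega> a \<le> 1})"
  proof (rule bdd_aboveI2)
    fix a assume "a \<in> {a \<in> l1w \<omega>. wnorm \<omega> a \<le> 1}"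
    then have a: "a \<in> l1w \<omega>" "wnorm \<omega> a \<le> 1" by auto
    have t: "t2norm (TT \<omega> N a) \<le> 2 * wnorm \<omega> a" by (rule TT_bound) (use w a in auto)
    have z: "0 \<le> wnorm \<omega> a" by (rule wnorm_nonneg) (use w a in auto)
    have "C * wnorm \<omega> a \<le> max C 0 * wnorm \<omega> a" using z by (simp add: mult_right_mono)
    also have "\<dots> \<le> max C 0 * 1" using a z by (intro mult_left_mono) auto
    finally have "t2norm (S a) \<le> max C 0" using C a by fastforce
    then show "t2norm (TT \<omega> N a - S a) \<le> 2 + max C 0"
      using t2norm_diff[of "TT \<omega> N a" "S a"] t a by linarith
  qed
  have "t2norm (TT \<omega> N u - S u) \<le> opnorm \<omega> (\<lambda>a. TT \<omega> N a - S a)"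
    unfolding opnorm_def by (rule cSUP_upper[OF _ bdd]) (use ul un in auto)
  with one show ?thesis by linarith
qed

lemma zero_Mult: "(\<lambda>a. 0) \<in> Mult \<omega>"
  unfolding Mult_def bdd_lin_def
  by (auto simp: t2scale_def t2mult_def t2norm_def zero_prod_def intro: exI[of _ 0])

theorem theoremt:
  fixes \<omega> :: "nat \<Rightarrow> real"
  assumes "\<And>n. \<omega> n \<ge> 1"
    and "\<not> bdd_above (range \<omega>)"
  shows "\<not> AMNM_pair \<omega>"
proof
  assume A: "AMNM_pair \<omega>"
  obtain \<delta> where d: "\<delta> > 0" and H: "\<forall>T. bdd_lin \<omega> T \<and> opnorm \<omega> T \<le> 2 \<and> defect \<omega> T \<le> \<delta>
        \<longrightarrow> dist_mult \<omega> T \<le> 1/2"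
    using A unfolding AMNM_pair_def
    by (metis less_numeral_extra(1) zero_less_divide_1_iff zero_less_numeral)
  obtain N where N: "\<omega> N > 1 / \<delta>"
    using assms(2) by (metis bdd_aboveI2 not_le rangeI)
  have pos: "\<omega> N > 0" using assms(1)[of N] by linarith
  have "1 / \<omega> N < \<delta>" using N d pos by (simp add: field_simps)
  then have def: "defect \<omega> (TT \<omega> N) \<le> \<delta>" using TT_defect[of \<omega> N] assms(1) by force
  have "dist_mult \<omega> (TT \<omega> N) \<le> 1/2"
    using H TT_bdd_lin[of \<omega> N] TT_opnorm[of \<omega> N] assms(1) def by blast
  moreover have "1 \<le> dist_mult \<omega> (TT \<omega> N)"
    unfolding dist_mult_def
  proof (rule cINF_greatest)
    show "Mult \<omega> \<noteq> {}" using zero_Mult by blast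
  next
    fix S assume "S \<in> Mult \<omega>"
    then show "1 \<le> opnorm \<omega> (\<lambda>a. TT \<omega> N a - S a)" using Mult_far[where \<omega>=\<omega> and S=S and N=N] assms(1) by blast
  qed
  ultimately show False by linarith
qed

end
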